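(* Let $k\ge3$. Let $C$ be a cycle of length $2k$ and $P$ a path of length $2k-1$ such that $E(C)\cap E(P)=\emptyset$ and $V(C)\cap V(P)\neq\emptyset$. If $H:=C\cup P$ has girth at least $2k-2$, then $H$ can be decomposed into two paths whose lengths lie in $\{2k-1,2k\}$.
   Context: Graphs are finite and simple; length = number of edges; girth = length of a shortest cycle. A decomposition of a graph is a set of subgraphs whose edge sets partition its edge set. *)

theory Defs
  imports Main
begin

text \<open>Simple graphs are represented by their edge sets: an edge is a 2-element vertex set.
  A path is given by its sequence of distinct vertices; a cycle likewise (cyclically).\<close>

definition path_edges :: "'a list \<Rightarrow> 'a set set" where
  "path_edges vs = {{vs ! i, vs ! Suc i} | i. Suc i < length vs}"

definition is_path :: "'a list \<Rightarrow> nat \<Rightarrow> bool" where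
  "is_path vs n \<longleftrightarrow> distinct vs \<and> length vs = Suc n"

definition cycle_edges :: "'a list \<Rightarrow> 'a set set" where
  "cycle_edges vs = {{vs ! i, vs ! ((Suc i) mod length vs)} | i. i < length vs}"

definition is_cycle :: "'a list \<Rightarrow> nat \<Rightarrow> bool" where
  "is_cycle vs n \<longleftrightarrow> distinct vs \<and> length vs = n \<and> 3 \<le> n"

definition girth_at_least :: "'a set set \<Rightarrow> nat \<Rightarrow> bool" where
  "girth_at_least E g \<longleftrightarrow> (\<forall>vs n. is_cycle vs n \<and> cycle_edges vs \<subseteq> E \<longrightarrow> g \<le> n)"

end

theory Submission
  imports Defs
begin

lemma Collect_Suc_lt: "{f i |i. i < Suc n} = insert (f 0) {f (Suc i) |i. i < n}"
  apply (rule set_eqI, rule iffI)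
   apply (clarsimp, case_tac i, auto)
  done

lemma pe_Nil[simp]: "path_edges [] = {}"
  by (simp add: path_edges_def)
lemma pe_single[simp]: "path_edges [x] = {}"
  by (simp add: path_edges_def)
lemma pe_Cons2[simp]: "path_edges (x#y#zs) = insert {x,y} (path_edges (y#zs))"
proof -
  have "path_edges (x#y#zs) = {{(x#y#zs) ! i, (x#y#zs) ! Suc i} | i. i < Suc (length zs)}"
    by (simp add: path_edges_def)
  also have "\<dots> = insert {x,y} {{(y#zs) ! i, (y#zs) ! Suc i} | i. i < length zs}"
    by (subst Collect_Suc_lt) simp
  finally show ?thesis by (simp add: path_edges_def)
qed

lemma pe_Cons: "xs \<noteq> [] \<Longrightarrow> path_edges (x#xs) = insert {x, hd xs} (path_edges xs)"
  by (cases xs) auto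

lemma pe_append: "path_edges (xs @ ys) = path_edges xs \<union> path_edges ys \<union>
   (if xs = [] \<or> ys = [] then {} else {{last xs, hd ys}})"
proof (induction xs)
  case Nil then show ?case by simp
next
  case (Cons x xs)
  show ?case
  proof (cases xs)
    case Nil then show ?thesis by (cases ys) auto
  next
    case (Cons y zs) then show ?thesis using Cons.IH by auto
  qed
qed

lemma pe_snoc: "xs \<noteq> [] \<Longrightarrow> path_edges (xs @ [y]) = insert {last xs, y} (path_edges xs)"
  by (simp add: pe_append)

lemma pe_rev[simp]: "path_edges (rev xs) = path_edges xs"
proof (induction xs)
  case Nil then show ?case by simp
next
  case (Cons x xs)
  show ?case
  proof (cases xs)
    case Nil then show ?thesis by simp
  next
    case (Cons y ys)
    have "path_edges (rev (x#xs)) = insert {last (rev xs), x} (path_edges (rev xs))"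
      using Cons by (simp add: pe_snoc del: rev.simps) (simp add: pe_append)
    also have "\<dots> = insert {x, y} (path_edges xs)" using Cons \<open>path_edges (rev xs) = path_edges xs\<close>
      by (simp add: insert_commute)
    finally show ?thesis using Cons by simp
  qed
qed

lemma pe_glue: "xs \<noteq> [] \<Longrightarrow> ys \<noteq> [] \<Longrightarrow> last xs = hd ys \<Longrightarrow>
   path_edges (butlast xs @ ys) = path_edges xs \<union> path_edges ys"
proof -
  assume a: "xs \<noteq> []" "ys \<noteq> []" "last xs = hd ys"
  have xs: "xs = butlast xs @ [last xs]" using a(1) by simp
  show ?thesis
  proof (cases "butlast xs = []")
    case True
    then have "path_edges xs = {}" by (subst xs) simp
    then show ?thesis using True by simp
  next
    case False
    have "path_edges xs = insert {last (butlast xs), last xs} (path_edges (butlast xs))"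
      using False by (subst xs) (simp add: pe_snoc)
    then show ?thesis using a False by (auto simp add: pe_append)
  qed
qed

lemma ce_pe: "xs \<noteq> [] \<Longrightarrow> cycle_edges xs = path_edges (xs @ [hd xs])"
proof -
  assume ne: "xs \<noteq> []"
  have key: "\<And>i. i < length xs \<Longrightarrow> xs ! (Suc i mod length xs) = (xs @ [hd xs]) ! Suc i \<and> xs ! i = (xs @ [hd xs]) ! i"
  proof -
    fix i assume i: "i < length xs"
    show "xs ! (Suc i mod length xs) = (xs @ [hd xs]) ! Suc i \<and> xs ! i = (xs @ [hd xs]) ! i"
    proof (cases "Suc i < length xs")
      case True then show ?thesis using i by (simp add: nth_append)
    next
      case False
      then have "Suc i = length xs" using i by simp
      then show ?thesis using i ne by (simp add: nth_append hd_conv_nth)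
    qed
  qed
  show ?thesis unfolding cycle_edges_def path_edges_def
    apply (rule set_eqI, rule iffI)
     apply (clarsimp, rename_tac i, rule_tac x=i in exI, simp add: key)
    apply (clarsimp, rename_tac i, rule_tac x=i in exI, simp add: key)
    done
qed

lemma ce_rotate1: "cycle_edges (rotate1 xs) = cycle_edges xs"
proof (cases xs)
  case Nil then show ?thesis by simp
next
  case (Cons x ys)
  show ?thesis
  proof (cases ys)
    case Nil then show ?thesis using Cons by simp
  next
    case (Cons y zs)
    have "cycle_edges (rotate1 xs) = path_edges ((y # zs @ [x]) @ [y])"
      using Cons \<open>xs = x # ys\<close> by (simp add: ce_pe)
    also have "\<dots> = insert {x,y} (path_edges (y # zs @ [x]))"
      by (subst pe_snoc) (auto simp: insert_commute)
    also have "\<dots> = path_edges (x # y # zs @ [x])" by simp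
    also have "\<dots> = cycle_edges xs" using Cons \<open>xs = x # ys\<close> by (simp add: ce_pe)
    finally show ?thesis .
  qed
qed

lemma ce_rotate: "cycle_edges (rotate n xs) = cycle_edges xs"
proof (induction n)
  case 0 then show ?case by simp
next
  case (Suc n)
  have "rotate (Suc n) xs = rotate1 (rotate n xs)" by simp
  then show ?case by (simp only: ce_rotate1 Suc.IH)
qed

lemma ce_revtl: "xs \<noteq> [] \<Longrightarrow> cycle_edges (hd xs # rev (tl xs)) = cycle_edges xs"
proof (cases xs)
  case Nil then show "xs \<noteq> [] \<Longrightarrow> ?thesis" by simp
next
  case (Cons x ys)
  have "cycle_edges (x # rev ys) = path_edges (rev (x # ys @ [x]))"
    by (simp add: ce_pe)
  also have "\<dots> = path_edges (x # ys @ [x])" by (rule pe_rev)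
  also have "\<dots> = cycle_edges (x # ys)" by (simp add: ce_pe)
  finally show ?thesis using Cons by simp
qed

definition pf :: "'a list \<Rightarrow> nat \<Rightarrow> 'a set" where "pf L i = {L!i, L!Suc i}"
definition cf :: "'a list \<Rightarrow> nat \<Rightarrow> 'a set" where "cf C i = {C!i, C!(Suc i mod length C)}"

lemma pe_img: "path_edges L = pf L ` {i. Suc i < length L}"
  unfolding path_edges_def pf_def by auto

lemma ce_img: "cycle_edges C = cf C ` {..<length C}"
  unfolding cycle_edges_def cf_def by auto

lemma pe_all: "path_edges L = pf L ` {..<length L - 1}"
  unfolding pe_img by (rule arg_cong[where f="image (pf L)"]) auto

lemma pe_take: "m < length L \<Longrightarrow> path_edges (take (Suc m) L) = pf L ` {..<m}"
  unfolding pe_img by (auto simp: image_def pf_def)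

lemma pe_drop: "path_edges (drop a L) = pf L ` {a..<length L - 1}"
  unfolding pe_img pf_def
  apply (auto simp: image_def)
  subgoal for y by (rule exI[of _ "y-a"]) simp
  done

lemma ce_take: "m < length C \<Longrightarrow> path_edges (take (Suc m) C) = cf C ` {..<m}"
  unfolding pe_img by (auto simp: image_def pf_def cf_def)

lemma ce_drop: "m < length C \<Longrightarrow> path_edges (drop m C @ [hd C]) = cf C ` {m..<length C}"
proof -
  assume m: "m < length C"
  have ne: "C \<noteq> []" using m by auto
  have "path_edges (drop m C @ [hd C]) = {{(drop m C @ [hd C])!i, (drop m C @ [hd C])!Suc i} |i. i < length C - m}"
    unfolding path_edges_def using m by auto
  also have "\<dots> = {cf C (m+i) |i. i < length C - m}"
  proof -
    have "\<And>i. i < length C - m \<Longrightarrow> {(drop m C @ [hd C])!i, (drop m C @ [hd C])!Suc i} = cf C (m+i)"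
    proof -
      fix i assume i: "i < length C - m"
      show "{(drop m C @ [hd C])!i, (drop m C @ [hd C])!Suc i} = cf C (m+i)"
      proof (cases "Suc i < length C - m")
        case True then show ?thesis using i m by (simp add: nth_append cf_def add.commute)
      next
        case False
        then have "Suc (m+i) = length C" using i by simp
        then show ?thesis using i m ne False by (simp add: nth_append cf_def hd_conv_nth)
      qed
    qed
    then show ?thesis by (metis (lifting))
  qed
  also have "\<dots> = cf C ` {m..<length C}"
    apply (auto simp: image_def)
    subgoal for y by (rule exI[of _ "y-m"]) simp
    done
  finally show ?thesis .
qed

lemma pf_inj: "distinct L \<Longrightarrow> inj_on (pf L) {..<length L - 1}"
  unfolding inj_on_def pf_def
  by (auto simp: doubleton_eq_iff nth_eq_iff_index_eq)

lemma cf_inj: "distinct C \<Longrightarrow> 3 \<le> length C \<Longrightarrow> inj_on (cf C) {..<length C}"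
proof (rule inj_onI)
  fix s t assume d: "distinct C" and l: "3 \<le> length C" and s: "s \<in> {..<length C}" and t: "t \<in> {..<length C}"
    and eq: "cf C s = cf C t"
  let ?n = "length C"
  have sn: "s < ?n" "t < ?n" "Suc s mod ?n < ?n" "Suc t mod ?n < ?n" using s t l by (auto intro!: mod_less_divisor)
  from eq have "(C!s = C!t \<and> C!(Suc s mod ?n) = C!(Suc t mod ?n)) \<or> (C!s = C!(Suc t mod ?n) \<and> C!(Suc s mod ?n) = C!t)"
    unfolding cf_def by (auto simp: doubleton_eq_iff)
  then have "s = t \<or> (s = Suc t mod ?n \<and> Suc s mod ?n = t)"
    using d sn by (auto simp: nth_eq_iff_index_eq)
  then show "s = t"
  proof
    assume h: "s = Suc t mod ?n \<and> Suc s mod ?n = t"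
    show "s = t"
    proof (cases "Suc t < ?n")
      case True
      then have "s = Suc t" using h by simp
      then show ?thesis using h l sn by (cases "Suc s < ?n") (auto simp: mod_Suc)
    next
      case False
      then have "s = 0" using h sn by (simp add: mod_Suc)
      have "Suc 0 mod ?n = 1" using l by simp
      then have "t = 1" using h \<open>s = 0\<close> by metis
      then show ?thesis using l False by simp
    qed
  qed
qed

lemma setlem1: "A \<inter> A' = {} \<Longrightarrow> B \<inter> B' = {} \<Longrightarrow> A \<subseteq> X \<Longrightarrow> A' \<subseteq> X \<Longrightarrow> B \<subseteq> Y \<Longrightarrow> B' \<subseteq> Y
  \<Longrightarrow> Y \<inter> X = {} \<Longrightarrow> (A \<union> B) \<inter> (B' \<union> A') = {}" by blast
lemma setlem2: "A \<union> A' = X \<Longrightarrow> B \<union> B' = Y \<Longrightarrow> (A \<union> B) \<union> (B' \<union> A') = Y \<union> X" by blast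

lemma construct:
  fixes C P :: "'a list" and n L a m :: nat
  assumes dC: "distinct C" and lC: "length C = n" and n3: "3 \<le> n"
    and dP: "distinct P" and lP: "length P = Suc L"
    and aL: "a \<le> L" and pa: "P!a = C!0" and m1: "1 \<le> m" and mn: "m < n"
    and disj1: "set (take a P) \<inter> set (take (Suc m) C) = {}"
    and disj2: "set (drop m C) \<inter> set (drop a P) = {}"
    and eD: "cycle_edges C \<inter> path_edges P = {}"
  shows "is_path (take a P @ take (Suc m) C) (a+m) \<and> is_path (drop m C @ drop a P) (n - m + (L - a))
     \<and> path_edges (take a P @ take (Suc m) C) \<inter> path_edges (drop m C @ drop a P) = {}
     \<and> path_edges (take a P @ take (Suc m) C) \<union> path_edges (drop m C @ drop a P) = cycle_edges C \<union> path_edges P"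
proof -
  have Cne: "C \<noteq> []" using lC n3 by auto
  have p1: "is_path (take a P @ take (Suc m) C) (a+m)"
    unfolding is_path_def using dC dP disj1 lC lP aL mn by auto
  have p2: "is_path (drop m C @ drop a P) (n - m + (L - a))"
    unfolding is_path_def using dC dP disj2 lC lP aL mn by auto
  have q1: "take a P @ take (Suc m) C = butlast (take (Suc a) P) @ take (Suc m) C"
    using aL lP by (simp add: butlast_take)
  have e1: "path_edges (take a P @ take (Suc m) C) = path_edges (take (Suc a) P) \<union> path_edges (take (Suc m) C)"
    unfolding q1 apply (rule pe_glue)
    using aL lP mn m1 lC Cne pa by (auto simp: take_Suc_conv_app_nth hd_conv_nth nth_append)
  have q2: "drop m C @ drop a P = butlast (drop m C @ [hd C]) @ drop a P" by simp
  have e2: "path_edges (drop m C @ drop a P) = path_edges (drop m C @ [hd C]) \<union> path_edges (drop a P)"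
    unfolding q2 apply (rule pe_glue)
    using aL lP mn lC Cne pa by (auto simp: hd_drop_conv_nth hd_conv_nth)
  have E1: "path_edges (take a P @ take (Suc m) C) = pf P ` {..<a} \<union> cf C ` {..<m}"
    using e1 pe_take[of a P] ce_take[of m C] aL lP mn lC by simp
  have E2: "path_edges (drop m C @ drop a P) = cf C ` {m..<n} \<union> pf P ` {a..<L}"
    using e2 pe_drop[of a P] ce_drop[of m C] aL lP mn lC by simp
  have PE: "path_edges P = pf P ` {..<L}" using pe_all[of P] lP by simp
  have CE: "cycle_edges C = cf C ` {..<n}" using ce_img[of C] lC by simp
  have ip: "inj_on (pf P) {..<L}" using pf_inj[OF dP] lP by simp
  have ic: "inj_on (cf C) {..<n}" using cf_inj[OF dC] lC n3 by simp
  have d1: "pf P ` {..<a} \<inter> pf P ` {a..<L} = {}"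
  proof -
    have "pf P ` ({..<a} \<inter> {a..<L}) = pf P ` {..<a} \<inter> pf P ` {a..<L}"
      by (rule inj_on_image_Int[OF ip]) (use aL in auto)
    moreover have "{..<a} \<inter> {a..<L} = {}" by auto
    ultimately show ?thesis by simp
  qed
  have d2: "cf C ` {..<m} \<inter> cf C ` {m..<n} = {}"
  proof -
    have "cf C ` ({..<m} \<inter> {m..<n}) = cf C ` {..<m} \<inter> cf C ` {m..<n}"
      by (rule inj_on_image_Int[OF ic]) (use mn in auto)
    moreover have "{..<m} \<inter> {m..<n} = {}" by auto
    ultimately show ?thesis by simp
  qed
  have s1: "pf P ` {..<a} \<subseteq> path_edges P" "pf P ` {a..<L} \<subseteq> path_edges P" unfolding PE using aL by auto
  have s2: "cf C ` {..<m} \<subseteq> cycle_edges C" "cf C ` {m..<n} \<subseteq> cycle_edges C" unfolding CE using mn by auto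
  have u1: "pf P ` {..<a} \<union> pf P ` {a..<L} = path_edges P"
  proof -
    have "{..<a} \<union> {a..<L} = {..<L}" using aL by auto
    then show ?thesis unfolding PE image_Un[symmetric] by simp
  qed
  have u2: "cf C ` {..<m} \<union> cf C ` {m..<n} = cycle_edges C"
  proof -
    have "{..<m} \<union> {m..<n} = {..<n}" using mn by auto
    then show ?thesis unfolding CE image_Un[symmetric] by simp
  qed
  have i: "path_edges (take a P @ take (Suc m) C) \<inter> path_edges (drop m C @ drop a P) = {}"
    unfolding E1 E2 by (rule setlem1[OF d1 d2 s1 s2 eD])
  have u: "path_edges (take a P @ take (Suc m) C) \<union> path_edges (drop m C @ drop a P) = cycle_edges C \<union> path_edges P"
    unfolding E1 E2 by (rule setlem2[OF u1 u2])
  show ?thesis using p1 p2 i u by blast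
qed

lemma pe_sub_take: "path_edges (take n L) \<subseteq> path_edges L"
  unfolding path_edges_def by fastforce

lemma pe_sub_drop: "path_edges (drop n L) \<subseteq> path_edges L"
  unfolding path_edges_def
  apply clarsimp
  subgoal for i by (rule exI[of _ "n+i"]) (auto simp: add.commute)
  done

lemma set_drop_take: "x \<in> set (drop a (take j P)) \<Longrightarrow> j \<le> length P \<Longrightarrow> \<exists>i. a \<le> i \<and> i < j \<and> x = P!i"
  apply (clarsimp simp: in_set_conv_nth)
  subgoal for i by (rule exI[of _ "a+i"]) auto
  done

lemma cyc_lem:
  fixes C P :: "'a list"
  assumes dC: "distinct C" and lC: "length C = n" and dP: "distinct P"
    and ja: "a < j" and jP: "j < length P" and pa: "P!a = C!0" and pj: "P!j = C!s"
    and s1: "1 \<le> s" and sn: "s < n"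
    and avoid: "\<forall>i. a < i \<longrightarrow> i < j \<longrightarrow> P!i \<notin> set (take (Suc s) C)"
    and eD: "cycle_edges C \<inter> path_edges P = {}"
    and g: "girth_at_least (cycle_edges C \<union> path_edges P) g"
  shows "g \<le> j - a + s"
proof -
  define X where "X = drop a (take j P) @ rev (drop 1 (take (Suc s) C))"
  have tC: "take (Suc s) C = C!0 # drop 1 (take (Suc s) C)"
    using sn lC by (cases C) auto
  have dX: "distinct X"
  proof -
    have "distinct (drop a (take j P))" using dP by simp
    moreover have "distinct (drop 1 (take (Suc s) C))" using dC by simp
    moreover have "set (drop a (take j P)) \<inter> set (drop 1 (take (Suc s) C)) = {}"
    proof (rule equals0I)
      fix x assume x: "x \<in> set (drop a (take j P)) \<inter> set (drop 1 (take (Suc s) C))"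
      then obtain i where i: "a \<le> i" "i < j" "x = P!i" using set_drop_take[of x a j P] jP by auto
      show False
      proof (cases "i = a")
        case True
        then have "C!0 \<in> set (drop 1 (take (Suc s) C))" using x i pa by simp
        moreover have "distinct (take (Suc s) C)" using dC by simp
        ultimately show False using tC by (metis distinct.simps(2))
      next
        case False
        then have "P!i \<notin> set (take (Suc s) C)" using avoid i by simp
        moreover have "set (drop 1 (take (Suc s) C)) \<subseteq> set (take (Suc s) C)" by (rule set_drop_subset)
        ultimately show False using x i by auto
      qed
    qed
    ultimately show ?thesis unfolding X_def by simp
  qed
  have lX: "length X = j - a + s" unfolding X_def using jP sn lC ja by simp
  have hX: "hd X = P!a" unfolding X_def using ja jP by (simp add: hd_drop_conv_nth)
  have XX: "X @ [hd X] = butlast (drop a (take (Suc j) P)) @ rev (take (Suc s) C)"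
  proof -
    have "X @ [hd X] = X @ [C!0]" using hX pa by simp
    also have "\<dots> = drop a (take j P) @ rev (C!0 # drop 1 (take (Suc s) C))"
      unfolding X_def by simp
    also have "\<dots> = drop a (take j P) @ rev (take (Suc s) C)" using tC by simp
    finally have "X @ [hd X] = drop a (take j P) @ rev (take (Suc s) C)" .
    moreover have "butlast (drop a (take (Suc j) P)) = drop a (take j P)"
      using jP by (simp add: butlast_drop butlast_take)
    ultimately show ?thesis by simp
  qed
  have Xne: "X \<noteq> []" using lX ja s1 by auto
  have ceX: "cycle_edges X = path_edges (drop a (take (Suc j) P)) \<union> path_edges (take (Suc s) C)"
  proof -
    have "cycle_edges X = path_edges (butlast (drop a (take (Suc j) P)) @ rev (take (Suc s) C))"
      using ce_pe[OF Xne] XX by simp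
    also have "\<dots> = path_edges (drop a (take (Suc j) P)) \<union> path_edges (rev (take (Suc s) C))"
    proof (rule pe_glue)
      show "drop a (take (Suc j) P) \<noteq> []" using ja jP by simp
      show "rev (take (Suc s) C) \<noteq> []" using sn lC by auto
      have "last (drop a (take (Suc j) P)) = P!j" using ja jP
        by (simp add: take_Suc_conv_app_nth)
      moreover have "hd (rev (take (Suc s) C)) = C!s" using sn lC
        by (simp add: take_Suc_conv_app_nth)
      ultimately show "last (drop a (take (Suc j) P)) = hd (rev (take (Suc s) C))" using pj by simp
    qed
    finally show ?thesis by simp
  qed
  have sub: "cycle_edges X \<subseteq> cycle_edges C \<union> path_edges P"
  proof -
    have "path_edges (drop a (take (Suc j) P)) \<subseteq> path_edges P"
      using pe_sub_drop pe_sub_take by (metis subset_trans)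
    moreover have "path_edges (take (Suc s) C) \<subseteq> cycle_edges C"
      using ce_take[of s C] ce_img[of C] sn lC by auto
    ultimately show ?thesis using ceX by blast
  qed
  have three: "3 \<le> j - a + s"
  proof (rule ccontr)
    assume "\<not> 3 \<le> j - a + s"
    then have js: "j = Suc a" "s = 1" using ja s1 by auto
    have "{P!a, P!Suc a} \<in> path_edges P" unfolding path_edges_def using js jP by auto
    moreover have "{C!0, C!1} \<in> cycle_edges C" unfolding cycle_edges_def
      using sn js lC by (auto intro!: exI[of _ 0])
    ultimately show False using eD pa pj js by auto
  qed
  have "is_cycle X (j - a + s)" unfolding is_cycle_def using dX lX three by simp
  then show ?thesis using g sub unfolding girth_at_least_def by blast
qed

lemma two_hit:
  fixes P :: "'a list"
  assumes dP: "distinct P" and uv: "u < v" and vP: "v < length P"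
    and z: "z \<notin> set (drop u (take (Suc v) P))"
    and e1: "{P!v, z} \<in> H" and e2: "{z, P!u} \<in> H" and pH: "path_edges P \<subseteq> H"
    and g: "girth_at_least H g"
  shows "g \<le> v - u + 2"
proof -
  define Y where "Y = drop u (take (Suc v) P)"
  define X where "X = Y @ [z]"
  have Yne: "Y \<noteq> []" unfolding Y_def using uv vP by simp
  have hY: "hd Y = P!u" unfolding Y_def using uv vP by (simp add: hd_drop_conv_nth)
  have lY: "last Y = P!v" unfolding Y_def using uv vP by (simp add: take_Suc_conv_app_nth)
  have dX: "distinct X" unfolding X_def using z dP Y_def by simp
  have lX: "length X = v - u + 2" unfolding X_def Y_def using uv vP by simp
  have "cycle_edges X = path_edges ((Y @ [z]) @ [P!u])"
    using ce_pe[of X] Yne hY unfolding X_def by simp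
  also have "\<dots> = insert {last (Y@[z]), P!u} (path_edges (Y@[z]))" by (rule pe_snoc) simp
  also have "\<dots> = insert {z, P!u} (insert {P!v, z} (path_edges Y))"
    using pe_snoc[OF Yne, of z] lY by simp
  finally have "cycle_edges X \<subseteq> H"
    using e1 e2 pH pe_sub_drop[of u "take (Suc v) P"] pe_sub_take[of "Suc v" P] unfolding Y_def by auto
  moreover have "is_cycle X (v - u + 2)" unfolding is_cycle_def using dX lX uv by simp
  ultimately show ?thesis using g unfolding girth_at_least_def by blast
qed

lemma list6: "length xs = 6 \<Longrightarrow> \<exists>a b c d e f. xs = [a,b,c,d,e,f]"
  by (cases xs; simp; rename_tac x1 xs1, case_tac xs1; simp; rename_tac x2 xs2, case_tac xs2; simp;
      rename_tac x3 xs3, case_tac xs3; simp; rename_tac x4 xs4, case_tac xs4; simp;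
      rename_tac x5 xs5, case_tac xs5; simp)

lemma triangle: "girth_at_least H 4 \<Longrightarrow> distinct [x,y,z] \<Longrightarrow> {x,y} \<in> H \<Longrightarrow> {y,z} \<in> H \<Longrightarrow> {z,x} \<in> H \<Longrightarrow> False"
proof -
  assume g: "girth_at_least H 4" and d: "distinct [x,y,z]" and h: "{x,y} \<in> H" "{y,z} \<in> H" "{z,x} \<in> H"
  have "cycle_edges [x,y,z] = {{x,y},{y,z},{z,x}}" by (simp add: ce_pe)
  then have "cycle_edges [x,y,z] \<subseteq> H" using h by simp
  moreover have "is_cycle [x,y,z] 3" using d by (simp add: is_cycle_def)
  ultimately show False using g unfolding girth_at_least_def by fastforce
qed

lemma k3_case:
  fixes C P :: "'a list"
  assumes cC: "is_cycle C 6" and pP: "is_path P 5" and h0: "P!0 = C!0" and h3: "P!3 = C!5" and h5: "P!5 = C!1"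
    and eD: "cycle_edges C \<inter> path_edges P = {}"
    and g: "girth_at_least (cycle_edges C \<union> path_edges P) 4"
  shows "\<exists>Q1 Q2 l1 l2. is_path Q1 l1 \<and> is_path Q2 l2 \<and> l1 \<in> {5,6} \<and> l2 \<in> {5,6}
     \<and> path_edges Q1 \<inter> path_edges Q2 = {} \<and> path_edges Q1 \<union> path_edges Q2 = cycle_edges C \<union> path_edges P"
proof -
  obtain c0 c1 c2 c3 c4 c5 where C: "C = [c0,c1,c2,c3,c4,c5]" using cC list6 unfolding is_cycle_def by blast
  have "length P = 6" using pP unfolding is_path_def by simp
  then obtain p0 p1 p2 p3 p4 p5 where P: "P = [p0,p1,p2,p3,p4,p5]" using list6 by blast
  have e: "p0 = c0" "p3 = c5" "p5 = c1" using h0 h3 h5 C P by auto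
  have dC: "distinct [c0,c1,c2,c3,c4,c5]" using cC C unfolding is_cycle_def by simp
  have dP: "distinct [c0,p1,p2,c5,p4,c1]" using pP P e unfolding is_path_def by simp
  have CE: "cycle_edges C = {{c0,c1},{c1,c2},{c2,c3},{c3,c4},{c4,c5},{c5,c0}}" unfolding C by (simp add: ce_pe)
  have PE: "path_edges P = {{c0,p1},{p1,p2},{p2,c5},{c5,p4},{p4,c1}}" unfolding P e by simp
  have eD': "\<And>x. x \<in> cycle_edges C \<Longrightarrow> x \<in> path_edges P \<Longrightarrow> False" using eD by blast
  let ?H = "cycle_edges C \<union> path_edges P"
  have p4c2: "p4 \<noteq> c2" using eD'[of "{c1,c2}"] CE PE by (auto simp: insert_commute)
  have p2c4: "p2 \<noteq> c4" using eD'[of "{c4,c5}"] CE PE by (auto simp: insert_commute)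
  have p4c4: "p4 \<noteq> c4" using eD'[of "{c4,c5}"] CE PE by (auto simp: insert_commute)
  have p4c3: "p4 \<noteq> c3"
  proof
    assume "p4 = c3"
    then show False using triangle[OF g, of c3 c4 c5] dC CE PE by (auto simp: insert_commute)
  qed
  have p2c3: "p2 \<noteq> c3"
  proof
    assume "p2 = c3"
    then show False using triangle[OF g, of c3 c4 c5] dC CE PE by (auto simp: insert_commute)
  qed
  have p1c4: "p1 \<noteq> c4"
  proof
    assume "p1 = c4"
    then show False using triangle[OF g, of c4 p2 c5] dC dP p2c4 CE PE by (auto simp: insert_commute)
  qed
  show ?thesis
  proof (cases "p1 = c3")
    case True
    have p2c2: "p2 \<noteq> c2" using eD'[of "{c2,c3}"] CE PE True by (auto simp: insert_commute)
    define Q1 where "Q1 = [c0,p1,p2,c5,p4,c1,c2]"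
    define Q2 where "Q2 = [c2,c3,c4,c5,c0,c1]"
    have "is_path Q1 6" unfolding Q1_def is_path_def using dP dC p4c2 p2c2 True by auto
    moreover have "is_path Q2 5" unfolding Q2_def is_path_def using dC by auto
    moreover have "path_edges Q1 \<inter> path_edges Q2 = {}"
      unfolding Q1_def Q2_def using dC dP True p4c2 p2c2 p2c4 p4c4 by (auto simp: doubleton_eq_iff)
    moreover have "path_edges Q1 \<union> path_edges Q2 = ?H"
      unfolding Q1_def Q2_def CE PE by (auto simp: insert_commute)
    ultimately show ?thesis by blast
  next
    case False
    define Q1 where "Q1 = [c3,c2,c1,p4,c5,c0]"
    define Q2 where "Q2 = [c3,c4,c5,p2,p1,c0,c1]"
    have "is_path Q1 5" unfolding Q1_def is_path_def using dP dC p4c2 p4c3 by auto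
    moreover have "is_path Q2 6" unfolding Q2_def is_path_def using dC dP p2c3 p2c4 p1c4 False by auto
    moreover have "path_edges Q1 \<inter> path_edges Q2 = {}"
      unfolding Q1_def Q2_def using dC dP False p4c2 p4c3 p2c3 p2c4 p1c4 p4c4 by (auto simp: doubleton_eq_iff)
    moreover have "path_edges Q1 \<union> path_edges Q2 = ?H"
      unfolding Q1_def Q2_def CE PE by (auto simp: insert_commute)
    ultimately show ?thesis by blast
  qed
qed

lemma revtl_props:
  assumes cC: "is_cycle C n"
  shows "is_cycle (hd C # rev (tl C)) n \<and> set (hd C # rev (tl C)) = set C
    \<and> cycle_edges (hd C # rev (tl C)) = cycle_edges C \<and> (hd C # rev (tl C))!0 = C!0
    \<and> (\<forall>t. 0 < t \<and> t < n \<longrightarrow> (hd C # rev (tl C))!t = C!(n-t))"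
proof -
  obtain c cs where C: "C = c # cs" using cC unfolding is_cycle_def by (cases C) auto
  have l: "length cs = n - 1" "n \<ge> 3" using cC C unfolding is_cycle_def by auto
  have "\<forall>t. 0 < t \<and> t < n \<longrightarrow> (c # rev cs)!t = C!(n-t)"
  proof (intro allI impI)
    fix t assume t: "0 < t \<and> t < n"
    then obtain t' where t': "t = Suc t'" by (cases t) auto
    have "(c # rev cs)!t = rev cs ! t'" using t' by simp
    also have "\<dots> = cs ! (length cs - Suc t')" using t t' l by (simp add: rev_nth)
    also have "\<dots> = C!(n-t)" using C t t' l by (simp add: nth_Cons')
    finally show "(c # rev cs)!t = C!(n-t)" .
  qed
  moreover have "cycle_edges (hd C # rev (tl C)) = cycle_edges C" using C by (intro ce_revtl) simp
  ultimately show ?thesis using cC C unfolding is_cycle_def by auto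
qed

lemma set_drop_nth: "x \<in> set (drop m L) \<Longrightarrow> \<exists>t. m \<le> t \<and> t < length L \<and> x = L!t"
  apply (clarsimp simp: in_set_conv_nth)
  subgoal for i by (rule exI[of _ "m+i"]) auto
  done

definition clear :: "'a list \<Rightarrow> 'a list \<Rightarrow> nat \<Rightarrow> nat \<Rightarrow> bool" where
  "clear P D a n \<longleftrightarrow> (\<forall>j t. a < j \<and> j < n \<and> 1 \<le> t \<and> t \<le> max a 1 \<longrightarrow> P!j \<noteq> D!t)"

lemma finish:
  fixes k a :: nat and D D' P :: "'a list"
  assumes k3: "3 \<le> k" and cD: "is_cycle D (2*k)" and cD': "is_cycle D' (2*k)"
    and pP: "is_path P (2*k - 1)" and eD: "cycle_edges D' \<inter> path_edges P = {}"
    and aP: "a < 2*k" and pa: "P!a = D'!0" and d0: "D!0 = D'!0"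
    and sD: "set D' = set D"
    and part: "\<forall>t. 0 < t \<and> t < 2*k \<longrightarrow> D'!t = D!(2*k-t)"
    and before: "\<forall>i<a. P!i \<notin> set D"
    and cl: "clear P D a (2*k)"
  shows "\<exists>Q1 Q2 l1 l2. is_path Q1 l1 \<and> is_path Q2 l2
           \<and> l1 \<in> {2 * k - 1, 2 * k} \<and> l2 \<in> {2 * k - 1, 2 * k}
           \<and> path_edges Q1 \<inter> path_edges Q2 = {}
           \<and> path_edges Q1 \<union> path_edges Q2 = cycle_edges D' \<union> path_edges P"
proof -
  define n where "n = 2*k"
  define m where "m = n - max a 1"
  have dD: "distinct D" "length D = n" using cD unfolding is_cycle_def n_def by auto
  have dD': "distinct D'" "length D' = n" using cD' unfolding is_cycle_def n_def by auto
  have dP: "distinct P" "length P = Suc (n - 1)" using pP k3 unfolding is_path_def n_def by auto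
  have m1: "1 \<le> m" "m < n" using aP k3 unfolding m_def n_def by auto
  have disj1: "set (take a P) \<inter> set (take (Suc m) D') = {}"
  proof (rule equals0I)
    fix x assume x: "x \<in> set (take a P) \<inter> set (take (Suc m) D')"
    then have x1: "x \<in> set (take a P)" and x2: "x \<in> set D'" by (auto dest: in_set_takeD)
    from x1 obtain i where "i < length (take a P)" "x = take a P ! i" by (auto simp: in_set_conv_nth)
    then have "i < a" "x = P!i" by auto
    then show False using before sD x2 by auto
  qed
  have disj2: "set (drop m D') \<inter> set (drop a P) = {}"
  proof (rule equals0I)
    fix x assume x: "x \<in> set (drop m D') \<inter> set (drop a P)"
    then obtain t where t: "m \<le> t" "t < n" "x = D'!t"
      using dD' set_drop_nth[of x m D'] by auto
    obtain i where i: "a \<le> i" "i < n" "x = P!i"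
      using x dP m1 set_drop_nth[of x a P] by auto
    have t0: "0 < t" using t m1 by auto
    have xD: "x = D!(n-t)" using part t t0 unfolding n_def by auto
    have nt: "1 \<le> n - t" "n - t \<le> max a 1" "n - t < n" using t m1 unfolding m_def by auto
    show False
    proof (cases "i = a")
      case True
      then have "D!0 = D!(n-t)" using xD i pa d0 by simp
      then show False using dD nt by (simp add: nth_eq_iff_index_eq)
    next
      case False
      then show False using cl i nt xD unfolding clear_def n_def by fastforce
    qed
  qed
  have aL: "a \<le> n - 1" using aP n_def by simp
  have c: "is_path (take a P @ take (Suc m) D') (a+m) \<and> is_path (drop m D' @ drop a P) (n - m + (n - 1 - a))
     \<and> path_edges (take a P @ take (Suc m) D') \<inter> path_edges (drop m D' @ drop a P) = {}
     \<and> path_edges (take a P @ take (Suc m) D') \<union> path_edges (drop m D' @ drop a P) = cycle_edges D' \<union> path_edges P"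
    by (rule construct[OF dD'(1) dD'(2) _ dP(1) dP(2) aL _ m1 disj1 disj2 eD])
       (use k3 n_def pa in auto)
  have l: "a + m \<in> {2 * k - 1, 2 * k}" "n - m + (n - 1 - a) \<in> {2 * k - 1, 2 * k}"
    using aP k3 unfolding m_def n_def by auto
  show ?thesis using c l by blast
qed

lemma hitbound:
  fixes k a :: nat and D P :: "'a list"
  assumes k3: "3 \<le> k" and cD: "is_cycle D (2*k)" and pP: "is_path P (2*k - 1)"
    and eD: "cycle_edges D \<inter> path_edges P = {}"
    and g: "girth_at_least (cycle_edges D \<union> path_edges P) (2*k - 2)"
    and aP: "a < 2*k" and pa: "P!a = D!0"
    and after: "\<forall>j<2*k. P!j \<in> set D \<longrightarrow> j + a \<le> 2*k - 1"
    and ncl: "\<not> clear P D a (2*k)"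
  shows "a \<le> 1 \<and> (\<exists>j. a < j \<and> j < 2*k \<and> P!j = D!1 \<and> 2*k - 2 \<le> j - a + 1 \<and> j + a \<le> 2*k - 1)"
proof -
  define n where "n = 2*k"
  have dD: "distinct D" "length D = n" using cD unfolding is_cycle_def n_def by auto
  have dP: "distinct P" "length P = n" using pP k3 unfolding is_path_def n_def by auto
  define hit where "hit j \<longleftrightarrow> a < j \<and> j < n \<and> (\<exists>t. 1 \<le> t \<and> t \<le> max a 1 \<and> P!j = D!t)" for j
  have ex: "\<exists>j. hit j" using ncl unfolding clear_def hit_def n_def by blast
  define j where "j = (LEAST j. hit j)"
  have hj: "hit j" unfolding j_def using ex by (metis LeastI)
  have mj: "\<And>i. i < j \<Longrightarrow> \<not> hit i" unfolding j_def by (rule not_less_Least)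
  obtain t where t: "1 \<le> t" "t \<le> max a 1" "P!j = D!t" "a < j" "j < n" using hj unfolding hit_def by blast
  have tn: "t < n" using t aP k3 n_def by auto
  have avoid: "\<forall>i. a < i \<longrightarrow> i < j \<longrightarrow> P!i \<notin> set (take (Suc t) D)"
  proof (intro allI impI notI)
    fix i assume i: "a < i" "i < j" and "P!i \<in> set (take (Suc t) D)"
    then obtain t' where t': "t' < Suc t" "P!i = D!t'" using dD tn
      by (auto simp: in_set_conv_nth)
    show False
    proof (cases "t' = 0")
      case True
      then have "P!i = P!a" using t' pa by simp
      then show False using dP i t by (simp add: nth_eq_iff_index_eq)
    next
      case False
      have "1 \<le> t'" "t' \<le> max a 1" using False t' t by auto
      then have "hit i" unfolding hit_def using i t t' by auto
      then show False using mj i by blast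
    qed
  qed
  have b1: "2*k - 2 \<le> j - a + t"
    by (rule cyc_lem[OF dD(1) dD(2) dP(1) t(4) _ pa t(3) t(1) tn avoid eD g]) (use t dP in simp)
  have b2: "j + a \<le> 2*k - 1" using after t dD nth_mem[of t D] tn unfolding n_def by auto
  have a1: "a \<le> 1"
  proof (rule ccontr)
    assume "\<not> a \<le> 1"
    then show False using b1 b2 t k3 by auto
  qed
  then have "t = 1" using t by auto
  then show ?thesis using a1 b1 b2 t unfolding n_def by auto
qed

abbreviation goal :: "nat \<Rightarrow> 'a set set \<Rightarrow> bool" where
  "goal k E \<equiv> (\<exists>Q1 Q2 l1 l2. is_path Q1 l1 \<and> is_path Q2 l2
           \<and> l1 \<in> {2 * k - 1, 2 * k} \<and> l2 \<in> {2 * k - 1, 2 * k}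
           \<and> path_edges Q1 \<inter> path_edges Q2 = {}
           \<and> path_edges Q1 \<union> path_edges Q2 = E)"

lemma core:
  fixes k a :: nat and C P :: "'a list"
  assumes k3: "3 \<le> k" and cC: "is_cycle C (2*k)" and pP: "is_path P (2*k - 1)"
    and eD: "cycle_edges C \<inter> path_edges P = {}"
    and g: "girth_at_least (cycle_edges C \<union> path_edges P) (2*k - 2)"
    and aP: "a < 2*k" and pa: "P!a = C!0"
    and before: "\<forall>i<a. P!i \<notin> set C"
    and after: "\<forall>j<2*k. P!j \<in> set C \<longrightarrow> j + a \<le> 2*k - 1"
  shows "goal k (cycle_edges C \<union> path_edges P)"
proof -
  define n where "n = 2*k"
  define C2 where "C2 = hd C # rev (tl C)"
  have R: "is_cycle C2 n \<and> set C2 = set C \<and> cycle_edges C2 = cycle_edges C \<and> C2!0 = C!0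
    \<and> (\<forall>t. 0 < t \<and> t < n \<longrightarrow> C2!t = C!(n-t))"
    unfolding C2_def by (rule revtl_props) (use cC n_def in simp)
  have cC2: "is_cycle C2 (2*k)" using R n_def by simp
  have sC2: "set C2 = set C" "cycle_edges C2 = cycle_edges C" "C2!0 = C!0" using R by auto
  have p2: "\<forall>t. 0 < t \<and> t < 2*k \<longrightarrow> C2!t = C!(2*k-t)" using R n_def by simp
  have p1: "\<forall>t. 0 < t \<and> t < 2*k \<longrightarrow> C!t = C2!(2*k-t)"
  proof (intro allI impI)
    fix t assume t: "0 < t \<and> t < 2*k"
    then have "C2!(2*k-t) = C!(2*k - (2*k-t))" using p2 by auto
    then show "C!t = C2!(2*k-t)" using t by simp
  qed
  have dC: "distinct C" "length C = 2*k" using cC unfolding is_cycle_def by auto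
  have dP: "distinct P" "length P = 2*k" using pP k3 unfolding is_path_def by auto
  show ?thesis
  proof (cases "clear P C a (2*k)")
    case True
    show ?thesis
    proof -
      have eD2: "cycle_edges C2 \<inter> path_edges P = {}" using eD sC2 by simp
      have pa2: "P!a = C2!0" using pa sC2 by simp
      have d0: "C!0 = C2!0" using sC2 by simp
      have "goal k (cycle_edges C2 \<union> path_edges P)"
        by (rule finish[OF k3 cC cC2 pP eD2 aP pa2 d0 sC2(1) p2 before True])
      then show ?thesis using sC2 by simp
    qed
  next
    case ncl1: False
    show ?thesis
    proof (cases "clear P C2 a (2*k)")
      case True
      show ?thesis
      proof -
        have d0: "C2!0 = C!0" using sC2 by simp
        have b2: "\<forall>i<a. P!i \<notin> set C2" using before sC2 by simp
        show ?thesis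
          by (rule finish[OF k3 cC2 cC pP eD aP pa d0 sC2(1)[symmetric] p1 b2 True])
      qed
    next
      case ncl2: False
      have h1: "a \<le> 1 \<and> (\<exists>j. a < j \<and> j < 2*k \<and> P!j = C!1 \<and> 2*k - 2 \<le> j - a + 1 \<and> j + a \<le> 2*k - 1)"
        by (rule hitbound[OF k3 cC pP eD g aP pa after ncl1])
      have h2: "a \<le> 1 \<and> (\<exists>j. a < j \<and> j < 2*k \<and> P!j = C2!1 \<and> 2*k - 2 \<le> j - a + 1 \<and> j + a \<le> 2*k - 1)"
      proof -
        have eD2: "cycle_edges C2 \<inter> path_edges P = {}" using eD sC2 by simp
        have g2: "girth_at_least (cycle_edges C2 \<union> path_edges P) (2*k - 2)" using g sC2 by simp
        have pa2: "P!a = C2!0" using pa sC2 by simp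
        have af2: "\<forall>j<2*k. P!j \<in> set C2 \<longrightarrow> j + a \<le> 2*k - 1" using after sC2 by simp
        show ?thesis by (rule hitbound[OF k3 cC2 pP eD2 g2 aP pa2 af2 ncl2])
      qed
      obtain j1 where j1: "a < j1" "j1 < 2*k" "P!j1 = C!1" "2*k - 2 \<le> j1 - a + 1" "j1 + a \<le> 2*k - 1"
        using h1 by blast
      obtain j2 where j2: "a < j2" "j2 < 2*k" "P!j2 = C!(2*k-1)" "2*k - 2 \<le> j2 - a + 1" "j2 + a \<le> 2*k - 1"
        using h2 p2 k3 by auto
      have c1: "C!1 \<noteq> C!(2*k-1)" using dC k3 by (simp add: nth_eq_iff_index_eq)
      have jne: "j1 \<noteq> j2" using j1 j2 c1 by auto
      have a0: "a = 0"
      proof (rule ccontr)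
        assume "a \<noteq> 0"
        then have "a = 1" using h1 by simp
        then show False using j1 j2 jne by auto
      qed
      have e1: "{C!0, C!1} \<in> cycle_edges C \<union> path_edges P" unfolding cycle_edges_def
        using dC k3 by (auto intro!: exI[of _ 0])
      have e2: "{C!(2*k-1), C!0} \<in> cycle_edges C \<union> path_edges P" unfolding cycle_edges_def
        using dC k3 by (auto intro!: exI[of _ "2*k-1"])
      have pH: "path_edges P \<subseteq> cycle_edges C \<union> path_edges P" by blast
      have zz: "\<And>u v. 0 < u \<Longrightarrow> C!0 \<notin> set (drop u (take (Suc v) P))"
      proof
        fix u v :: nat assume u: "0 < u" and z: "C!0 \<in> set (drop u (take (Suc v) P))"
        have "set (drop u (take (Suc v) P)) \<subseteq> set (drop u P)"
          by (simp add: drop_take set_take_subset)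
        then have z2: "P!0 \<in> set (drop u P)" using z pa a0 by auto
        have "P!0 \<in> set (take u P)" using u dP k3 by (simp add: in_set_conv_nth) (rule exI[of _ 0], simp)
        then show False using z2 set_take_disj_set_drop_if_distinct[OF dP(1), of u u] by auto
      qed
      have bnd: "2*k - 2 \<le> (max j1 j2) - (min j1 j2) + 2"
      proof (cases "j1 < j2")
        case True
        have f1: "{P!j2, C!0} \<in> cycle_edges C \<union> path_edges P" using e2 j2(3) by simp
        have f2: "{C!0, P!j1} \<in> cycle_edges C \<union> path_edges P" using e1 j1(3) by simp
        have "2*k - 2 \<le> j2 - j1 + 2"
          by (rule two_hit[OF dP(1) True _ zz[of j1 j2] f1 f2 pH g]) (use j1 j2 dP in auto)
        then show ?thesis using True by (simp add: max_def min_def)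
      next
        case False
        then have lt: "j2 < j1" using jne by auto
        have f1: "{P!j1, C!0} \<in> cycle_edges C \<union> path_edges P" using e1 j1(3) by (simp add: insert_commute)
        have f2: "{C!0, P!j2} \<in> cycle_edges C \<union> path_edges P" using e2 j2(3) by (simp add: insert_commute)
        have "2*k - 2 \<le> j1 - j2 + 2"
          by (rule two_hit[OF dP(1) lt _ zz[of j2 j1] f1 f2 pH g]) (use j1 j2 dP in auto)
        then show ?thesis using lt by (simp add: max_def min_def)
      qed
      have r1: "2*k - 3 \<le> j1" "j1 \<le> 2*k - 1" "2*k - 3 \<le> j2" "j2 \<le> 2*k - 1"
        using j1(4,5) j2(4,5) a0 by simp_all
      have mm: "max j1 j2 - min j1 j2 \<le> 2"
        using r1 by (cases "j1 \<le> j2") (simp_all add: max_def min_def)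
      have k3': "k = 3" using bnd mm k3 by linarith
      have r2: "3 \<le> j1" "j1 \<le> 5" "3 \<le> j2" "j2 \<le> 5" using r1 k3' by simp_all
      have md: "2 \<le> max j1 j2 - min j1 j2" using bnd k3' by simp
      have jj: "(j1 = 5 \<and> j2 = 3) \<or> (j1 = 3 \<and> j2 = 5)"
      proof (cases "j1 \<le> j2")
        case True
        then have "2 \<le> j2 - j1" using md by (simp add: max_def min_def)
        then show ?thesis using r2 True by presburger
      next
        case False
        then have "2 \<le> j1 - j2" using md by (simp add: max_def min_def)
        then show ?thesis using r2 False by presburger
      qed
      have gk: "girth_at_least (cycle_edges C \<union> path_edges P) 4" using g k3' by simp
      have cC6: "is_cycle C 6" "is_cycle C2 6" using cC cC2 k3' by auto
      have pP5: "is_path P 5" using pP k3' by simp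
      have P0: "P!0 = C!0" "P!0 = C2!0" using pa a0 sC2 by auto
      have G: "goal 3 (cycle_edges C \<union> path_edges P)"
      proof (cases "j1 = 5")
        case True
        then have "j2 = 3" using jj by auto
        have h: "P!3 = C!5" "P!5 = C!1" using j1(3) j2(3) True k3' \<open>j2 = 3\<close> by simp_all
        have K: "\<exists>Q1 Q2 l1 l2. is_path Q1 l1 \<and> is_path Q2 l2 \<and> l1 \<in> {5,6} \<and> l2 \<in> {5,6}
          \<and> path_edges Q1 \<inter> path_edges Q2 = {} \<and> path_edges Q1 \<union> path_edges Q2 = cycle_edges C \<union> path_edges P"
          by (rule k3_case[OF cC6(1) pP5 P0(1) h eD gk])
        have e: "{2*3-1, 2*3} = {5::nat,6}" by simp
        show ?thesis unfolding e by (rule K)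
      next
        case False
        then have "j1 = 3" "j2 = 5" using jj by auto
        have q1: "C!1 = C2!(2*k-1)" using p1 k3 by auto
        have q2: "C2!1 = C!(2*k-1)" using p2 k3 by auto
        have h: "P!3 = C2!5" "P!5 = C2!1" using j1(3) j2(3) q1 q2 k3' \<open>j1 = 3\<close> \<open>j2 = 5\<close> by simp_all
        have eD2: "cycle_edges C2 \<inter> path_edges P = {}" using eD sC2 by simp
        have gk2: "girth_at_least (cycle_edges C2 \<union> path_edges P) 4" using gk sC2 by simp
        have K: "\<exists>Q1 Q2 l1 l2. is_path Q1 l1 \<and> is_path Q2 l2 \<and> l1 \<in> {5,6} \<and> l2 \<in> {5,6}
          \<and> path_edges Q1 \<inter> path_edges Q2 = {} \<and> path_edges Q1 \<union> path_edges Q2 = cycle_edges C2 \<union> path_edges P"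
          by (rule k3_case[OF cC6(2) pP5 P0(2) h eD2 gk2])
        have e: "{2*3-1, 2*3} = {5::nat,6}" by simp
        show ?thesis unfolding e using K unfolding sC2(2) .
      qed
      show ?thesis using G by (simp only: k3')
    qed
  qed
qed

lemma core2:
  fixes k a :: nat and C P :: "'a list"
  assumes k3: "3 \<le> k" and cC: "is_cycle C (2*k)" and pP: "is_path P (2*k - 1)"
    and eD: "cycle_edges C \<inter> path_edges P = {}"
    and g: "girth_at_least (cycle_edges C \<union> path_edges P) (2*k - 2)"
    and aP: "a < 2*k" and pa: "P!a \<in> set C"
    and before: "\<forall>i<a. P!i \<notin> set C"
    and after: "\<forall>j<2*k. P!j \<in> set C \<longrightarrow> j + a \<le> 2*k - 1"
  shows "goal k (cycle_edges C \<union> path_edges P)"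
proof -
  have lC: "length C = 2*k" using cC unfolding is_cycle_def by simp
  obtain r where r: "r < 2*k" "C!r = P!a" using pa lC by (auto simp: in_set_conv_nth)
  define C1 where "C1 = rotate r C"
  have c1: "is_cycle C1 (2*k)" using cC unfolding C1_def is_cycle_def by simp
  have s1: "set C1 = set C" "cycle_edges C1 = cycle_edges C" unfolding C1_def by (simp_all add: ce_rotate)
  have p1: "P!a = C1!0" unfolding C1_def using r lC k3 by (simp add: nth_rotate)
  have "goal k (cycle_edges C1 \<union> path_edges P)"
    by (rule core[OF k3 c1 pP _ _ aP p1]) (use eD g before after s1 in simp_all)
  then show ?thesis using s1 by simp
qed

theorem mainTheorem9:
  fixes k :: nat and C P :: "'a list"
  assumes "3 \<le> k"
    and "is_cycle C (2 * k)"
    and "is_path P (2 * k - 1)"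
    and "cycle_edges C \<inter> path_edges P = {}"
    and "set C \<inter> set P \<noteq> {}"
    and "girth_at_least (cycle_edges C \<union> path_edges P) (2 * k - 2)"
  shows "\<exists>Q1 Q2 l1 l2. is_path Q1 l1 \<and> is_path Q2 l2
           \<and> l1 \<in> {2 * k - 1, 2 * k} \<and> l2 \<in> {2 * k - 1, 2 * k}
           \<and> path_edges Q1 \<inter> path_edges Q2 = {}
           \<and> path_edges Q1 \<union> path_edges Q2 = cycle_edges C \<union> path_edges P"
proof -
  note k3 = assms(1) and cC = assms(2) and pP = assms(3) and eD = assms(4) and ne = assms(5) and g = assms(6)
  have lP: "length P = 2*k" "distinct P" using pP k3 unfolding is_path_def by auto
  define S where "S = {i. i < 2*k \<and> P!i \<in> set C}"
  have fS: "finite S" unfolding S_def by simp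
  have neS: "S \<noteq> {}"
  proof -
    obtain x where "x \<in> set C" "x \<in> set P" using ne by blast
    then obtain i where "i < 2*k" "P!i = x" using lP by (auto simp: in_set_conv_nth)
    then show ?thesis unfolding S_def using \<open>x \<in> set C\<close> by auto
  qed
  define a where "a = Min S"
  define b where "b = Max S"
  have aS: "a \<in> S" "b \<in> S" unfolding a_def b_def using fS neS by auto
  have amin: "\<And>i. i \<in> S \<Longrightarrow> a \<le> i" unfolding a_def using fS by simp
  have bmax: "\<And>i. i \<in> S \<Longrightarrow> i \<le> b" unfolding b_def using fS by simp
  show ?thesis
  proof (cases "a + b \<le> 2*k - 1")
    case True
    show ?thesis
    proof (rule core2[OF k3 cC pP eD g])
      show "a < 2*k" "P!a \<in> set C" using aS unfolding S_def by auto
      show "\<forall>i<a. P!i \<notin> set C"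
      proof (intro allI impI notI)
        fix i assume "i < a" "P!i \<in> set C"
        then have "i \<in> S" unfolding S_def using aS(1) S_def by auto
        then show False using amin \<open>i < a\<close> by fastforce
      qed
      show "\<forall>j<2*k. P!j \<in> set C \<longrightarrow> j + a \<le> 2*k - 1"
        using bmax True unfolding S_def by fastforce
    qed
  next
    case False
    define P' where "P' = rev P"
    define a' where "a' = 2*k - 1 - b"
    have bk: "b < 2*k" using aS unfolding S_def by auto
    have nth': "\<And>i. i < 2*k \<Longrightarrow> P'!i = P!(2*k - 1 - i)"
      unfolding P'_def using lP by (simp add: rev_nth)
    have pP': "is_path P' (2*k - 1)" using pP unfolding P'_def is_path_def by simp
    have eP': "path_edges P' = path_edges P" unfolding P'_def by simp
    have "goal k (cycle_edges C \<union> path_edges P')"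
    proof (rule core2[OF k3 cC pP'])
      show "cycle_edges C \<inter> path_edges P' = {}" using eD eP' by simp
      show "girth_at_least (cycle_edges C \<union> path_edges P') (2*k - 2)" using g eP' by simp
      show "a' < 2*k" unfolding a'_def using k3 by simp
      show "P'!a' \<in> set C" using nth'[of a'] aS bk unfolding a'_def S_def by simp
      show "\<forall>i<a'. P'!i \<notin> set C"
      proof (intro allI impI notI)
        fix i assume i: "i < a'" "P'!i \<in> set C"
        then have "2*k - 1 - i \<in> S" unfolding S_def using nth'[of i] k3 unfolding a'_def by auto
        then have "2*k - 1 - i \<le> b" by (rule bmax)
        then show False using i unfolding a'_def by auto
      qed
      show "\<forall>j<2*k. P'!j \<in> set C \<longrightarrow> j + a' \<le> 2*k - 1"
      proof (intro allI impI)
        fix j assume j: "j < 2*k" "P'!j \<in> set C"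
        then have "2*k - 1 - j \<in> S" unfolding S_def using nth'[of j] by auto
        then have "a \<le> 2*k - 1 - j" by (rule amin)
        then show "j + a' \<le> 2*k - 1" using False j bk unfolding a'_def by auto
      qed
    qed
    then show ?thesis using eP' by simp
  qed
qed

end
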